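(* Let $\mathcal{A}$ be a CA of radius $r$ over alphabet $Q$. If $w$ is the foot of a wall of $\mathcal{A}$ having some brick of length at least $r$, then for every word $u\in Q^*$ there exists a wall of $\mathcal{A}$ whose foot is $wuw$ and which has bricks of length at least $|u|$.
   Context: A one-dimensional cellular automaton (CA) $\mathcal{A}$ is given by a finite alphabet $Q$, a radius $r\ge 0$ and a local rule $\delta:Q^{2r+1}\to Q$; it acts on configurations $c\in Q^{\mathbb{Z}}$ by $\mathcal{A}(c)_i=\delta(c_{i-r},\dots,c_{i+r})$. For $u\in Q^*$, $i\in\mathbb{Z}$, $[u]_i=\{c\in Q^{\mathbb{Z}}: c_i\cdots c_{i+|u|-1}=u\}$. Walls: for $u\in Q^*$ let $\langle u\rangle=[u]_{-|u|/2}$ if $|u|$ is even and $\langle u\rangle=[u]_{-(|u|+1)/2}$ if $|u|$ is odd. A wall for $\mathcal{A}$ is a sequence $(w_n)_{n\ge0}$ of nonempty words over $Q$ such that (1) for every $c\in\langle w_0\rangle$ and every $n\ge1$, $\mathcal{A}^n(c)\in\langle w_n\rangle$, and (2) the sequence $(|w_n|)_{n\ge0}$ is non-increasing. The word $w_0$ is the foot of the wall. A word $w$ is a brick of the wall $(w_n)$ if there are integers $p\ge1$, $n_0\ge0$ with $w_{pn+n_0}=w$ for all $n\ge0$. *)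

theory Defs
  imports Main
begin

definition ca_global :: "('q list \<Rightarrow> 'q) \<Rightarrow> nat \<Rightarrow> (int \<Rightarrow> 'q) \<Rightarrow> (int \<Rightarrow> 'q)" where
  "ca_global delta r c = (\<lambda>i. delta (map (\<lambda>j. c (i - int r + int j)) [0..<2*r+1]))"

definition cyl :: "'q list \<Rightarrow> int \<Rightarrow> (int \<Rightarrow> 'q) set" where
  "cyl u i = {c. \<forall>k<length u. c (i + int k) = u ! k}"

definition ccyl :: "'q list \<Rightarrow> (int \<Rightarrow> 'q) set" where
  "ccyl u = (if even (length u) then cyl u (- (int (length u) div 2))
             else cyl u (- ((int (length u) + 1) div 2)))"

definition is_wall :: "('q list \<Rightarrow> 'q) \<Rightarrow> nat \<Rightarrow> (nat \<Rightarrow> 'q list) \<Rightarrow> bool" where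
  "is_wall delta r w \<longleftrightarrow>
     (\<forall>n. w n \<noteq> []) \<and>
     (\<forall>c\<in>ccyl (w 0). \<forall>n\<ge>1. (ca_global delta r ^^ n) c \<in> ccyl (w n)) \<and>
     (\<forall>m n. m \<le> n \<longrightarrow> length (w n) \<le> length (w m))"

definition is_brick :: "(nat \<Rightarrow> 'q list) \<Rightarrow> 'q list \<Rightarrow> bool" where
  "is_brick w b \<longleftrightarrow> (\<exists>p n0. p \<ge> 1 \<and> (\<forall>n. w (p * n + n0) = b))"

end

theory Submission
  imports Defs
begin

definition gc :: "int \<Rightarrow> int" where "gc x = (x+1) div 2"
lemma gc_le: "0 \<le> x \<Longrightarrow> gc x \<le> x" unfolding gc_def by presburger
lemma gc_nn: "0 \<le> x \<Longrightarrow> 0 \<le> gc x" unfolding gc_def by presburger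
lemma gc_pos: "1 \<le> x \<Longrightarrow> 1 \<le> gc x" unfolding gc_def by presburger
lemma gc_sum: "x \<le> gc x + gc x" unfolding gc_def by presburger
lemma gc_sum2: "gc x + gc x \<le> x + 1" unfolding gc_def by presburger
lemma gc_mono: "x \<le> y \<Longrightarrow> gc x \<le> gc y" unfolding gc_def by (simp add: zdiv_mono1)
lemma gc_2: "gc (2*m+k) = m + gc k" unfolding gc_def by presburger
lemma gc_1: "gc 1 = 1" unfolding gc_def by simp

lemma window_ok: "(k::int) \<ge> 0 \<Longrightarrow> m \<ge> 0 \<Longrightarrow> K = max k 1 \<Longrightarrow> ln \<ge> 1 \<Longrightarrow> j < K \<Longrightarrow> j \<ge> 0 \<Longrightarrow>
  P0 = - gc (2*m+k) \<Longrightarrow> tL = P0 + gc m \<Longrightarrow> tR = tL + m + k \<Longrightarrow>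
  tL - gc ln \<le> - gc K + j \<and> - gc K + j < tR + ln - gc ln"
  apply (cases "k \<ge> 1")
  using gc_le[of m] gc_nn[of m] gc_le[of ln] gc_pos[of ln] gc_sum[of K] gc_sum2[of K] gc_sum[of ln]
    gc_sum2[of ln] gc_2[of m k] gc_le[of k] gc_nn[of k] gc_sum[of k]  gc_sum2[of k] gc_1
  by (auto simp: max_def)

lemma middle_ok: "(r::int) \<le> l' \<Longrightarrow> l' \<le> ln \<Longrightarrow> tL + l' - gc l' \<le> i \<Longrightarrow> i < tR - gc l' \<Longrightarrow>
   tL - gc ln \<le> i - r \<and> i + r < tR + ln - gc ln"
  using gc_mono[of l' ln] gc_sum[of l'] gc_sum2[of l'] gc_sum[of ln] gc_sum2[of ln]
  by linarith

definition sh :: "int \<Rightarrow> (int \<Rightarrow> 'q) \<Rightarrow> (int \<Rightarrow> 'q)" where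
  "sh t c = (\<lambda>i. c (i + t))"

lemma ca_sh: "ca_global d r (sh t c) = sh t (ca_global d r c)"
  unfolding ca_global_def sh_def by (auto simp: fun_eq_iff algebra_simps)

lemma funpow_sh: "(ca_global d r ^^ n) (sh t c) = sh t ((ca_global d r ^^ n) c)"
  by (induction n) (auto simp: ca_sh)

lemma cyl_sh: "sh t c \<in> cyl u i \<longleftrightarrow> c \<in> cyl u (i + t)"
  unfolding cyl_def sh_def by (auto simp: algebra_simps)

lemma ccyl_eq: "ccyl u = cyl u (- gc (int (length u)))"
  unfolding ccyl_def gc_def by (auto elim: evenE)

lemma locality:
  assumes "\<And>j. i - int r \<le> j \<Longrightarrow> j \<le> i + int r \<Longrightarrow> c j = c' j"
  shows "ca_global d r c i = ca_global d r c' i"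
  unfolding ca_global_def using assms by (auto intro!: arg_cong[where f=d])

lemma wall_shift:
  assumes "is_wall d r w" "c \<in> cyl (w 0) a"
  shows "(ca_global d r ^^ n) c \<in> cyl (w n) (a + gc (int (length (w 0))) - gc (int (length (w n))))"
proof (cases "n = 0")
  case True then show ?thesis using assms by simp
next
  case False
  define t where "t = a + gc (int (length (w 0)))"
  have "sh t c \<in> ccyl (w 0)" unfolding ccyl_eq cyl_sh t_def using assms(2) by simp
  then have "(ca_global d r ^^ n) (sh t c) \<in> ccyl (w n)" using assms(1) False
    unfolding is_wall_def by auto
  then show ?thesis unfolding funpow_sh ccyl_eq cyl_sh t_def by (simp add: algebra_simps)
qed

lemma cyl_append:
  assumes "c \<in> cyl (x @ y) a"
  shows "c \<in> cyl x a" "c \<in> cyl y (a + int (length x))"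
proof -
  show "c \<in> cyl x a"
  proof -
    { fix k assume "k < length x"
      with assms have "c (a + int k) = (x @ y) ! k" unfolding cyl_def by auto
      with \<open>k < length x\<close> have "c (a + int k) = x ! k" by (simp add: nth_append) }
    then show ?thesis unfolding cyl_def by auto
  qed
  show "c \<in> cyl y (a + int (length x))"
  proof -
    { fix k assume "k < length y"
      have "length x + k < length (x @ y)" using \<open>k < length y\<close> by simp
      with assms have "c (a + int (length x + k)) = (x @ y) ! (length x + k)" unfolding cyl_def by blast
      then have "c (a + int (length x) + int k) = y ! k" by (simp add: nth_append algebra_simps) }
    then show ?thesis unfolding cyl_def by auto
  qed
qed


lemma cyl_val:
  assumes "c \<in> cyl u a" "a \<le> i" "i < a + int (length u)"
  shows "c i = u ! nat (i - a)"
proof -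
  have "nat (i - a) < length u" using assms(2,3) by linarith
  then have "c (a + int (nat (i - a))) = u ! nat (i - a)" using assms(1) unfolding cyl_def by blast
  moreover have "a + int (nat (i - a)) = i" using assms(2) by simp
  ultimately show ?thesis by simp
qed

lemma periodic_rep:
  assumes "\<And>i. c (i + W) = c (i::int)"
  shows "c (i + int n * W) = c i"
proof (induction n)
  case 0 then show ?case by simp
next
  case (Suc n)
  have "c (i + int (Suc n) * W) = c ((i + int n * W) + W)"
    by (rule arg_cong[where f=c]) (simp add: algebra_simps)
  then show ?case using assms[of "i + int n * W"] Suc by simp
qed

lemma periodic_mod:
  assumes "\<And>i. c (i + W) = c (i::int)"
  shows "c i = c (i mod W)"
proof (cases "i div W \<ge> 0")
  case True
  have "c (i mod W + int (nat (i div W)) * W) = c (i mod W)" by (rule periodic_rep[where c=c and W=W, OF assms])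
  moreover have "i mod W + int (nat (i div W)) * W = i" using True by simp
  ultimately show ?thesis by simp
next
  case False
  have "c (i + int (nat (- (i div W))) * W) = c i" by (rule periodic_rep[where c=c and W=W, OF assms])
  moreover have "i + int (nat (- (i div W))) * W = i mod W" using False
    by (simp add: minus_div_mult_eq_mod[symmetric] algebra_simps)
  ultimately show ?thesis by simp
qed

lemma periodic_orbit:
  fixes c :: "int \<Rightarrow> 'q::finite"
  assumes "sh (int W) c = c" "W > 0"
  shows "\<exists>a b. a < b \<and> (ca_global d r ^^ a) c = (ca_global d r ^^ b) c"
proof -
  let ?F = "ca_global d r"
  let ?emb = "\<lambda>l::'q list. \<lambda>i::int. l ! nat (i mod int W)"
  have per: "sh (int W) ((?F ^^ n) c) = (?F ^^ n) c" for n
    using assms(1) by (metis funpow_sh)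
  have "range (\<lambda>n. (?F ^^ n) c) \<subseteq> ?emb ` {l. length l = W}"
  proof
    fix x assume "x \<in> range (\<lambda>n. (?F ^^ n) c)"
    then obtain n where x: "x = (?F ^^ n) c" by auto
    have xp: "\<And>i. x (i + int W) = x i" using per[of n] unfolding x sh_def by (metis fun_eq_iff)
    define l where "l = map (\<lambda>j. x (int j)) [0..<W]"
    have "x = ?emb l"
    proof
      fix i
      have "0 \<le> i mod int W" "i mod int W < int W" using assms(2) by auto
      then show "x i = ?emb l i" unfolding l_def using periodic_mod[where c=x and W="int W", OF xp, of i]
        by (simp add: nat_less_iff)
    qed
    then show "x \<in> ?emb ` {l. length l = W}" unfolding l_def by auto
  qed
  moreover have "finite {l::'q list. length l = W}" using finite_lists_length_eq[of "UNIV::'q set" W] by simp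
  ultimately have "finite (range (\<lambda>n. (?F ^^ n) c))" by (meson finite_imageI finite_subset)
  then have "\<not> inj (\<lambda>n. (?F ^^ n) c)" using finite_imageD by blast
  then obtain a b where "a \<noteq> b" "(?F ^^ a) c = (?F ^^ b) c" unfolding inj_def by blast
  then show ?thesis by (metis linorder_neqE_nat)
qed

lemma orbit_period:
  fixes f :: "'a \<Rightarrow> 'a"
  assumes "a < b" "(f ^^ a) c = (f ^^ b) c"
  shows "(f ^^ ((b - a) * j + a)) c = (f ^^ a) c"
proof (induction j)
  case 0 then show ?case by simp
next
  case (Suc j)
  have e: "(b - a) * Suc j + a = (b - a) * j + b" unfolding mult_Suc_right using assms(1) by linarith
  have "(f ^^ ((b - a) * Suc j + a)) c = (f ^^ ((b - a) * j)) ((f ^^ b) c)"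
    unfolding e funpow_add by simp
  also have "\<dots> = (f ^^ ((b - a) * j)) ((f ^^ a) c)" using assms(2) by simp
  also have "\<dots> = (f ^^ ((b - a) * j + a)) c" by (simp add: funpow_add)
  finally show ?case using Suc by simp
qed


theorem mainTheorem3:
  fixes delta :: "'q::finite list \<Rightarrow> 'q" and r :: nat and w :: "nat \<Rightarrow> 'q list"
  assumes "is_wall delta r w"
    and "\<exists>b. is_brick w b \<and> length b \<ge> r"
  shows "\<forall>u. \<exists>w'. is_wall delta r w' \<and> w' 0 = w 0 @ u @ w 0 \<and>
           (\<exists>b. is_brick w' b \<and> length b \<ge> length u)"
proof
  fix u :: "'q list"
  define F where "F = ca_global delta r"
  define w0 where "w0 = w 0"
  define m where "m = int (length w0)"
  define k where "k = int (length u)"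
  define v where "v = w0 @ u @ w0"
  define W where "W = length v"
  define P0 where "P0 = - gc (int W)"
  define tL where "tL = P0 + gc m"
  define tR where "tR = tL + m + k"
  define K where "K = max k 1"
  define Kn where "Kn = nat K"
  define l where "l n = int (length (w n))" for n
  have wall: "is_wall delta r w" by fact
  have W_eq: "int W = 2 * m + k" unfolding W_def v_def m_def k_def by simp
  have m0: "m \<ge> 0" and k0: "k \<ge> 0" unfolding m_def k_def by auto
  have lnonempty: "l n \<ge> 1" for n
    using wall unfolding is_wall_def l_def by (metis One_nat_def length_greater_0_conv less_eq_Suc_le of_nat_1 of_nat_le_iff)
  have lmono: "n \<le> n' \<Longrightarrow> l n' \<le> l n" for n n'
    using wall unfolding is_wall_def l_def by simp
  have lr: "int r \<le> l n" for n
  proof -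
    obtain b where b: "is_brick w b" "length b \<ge> r" using assms(2) by blast
    then obtain p n0 where p: "p \<ge> 1" "\<And>j. w (p * j + n0) = b" unfolding is_brick_def by blast
    have "n \<le> p * n + n0" using p(1) by (metis le_add1 mult_1 mult_le_mono1 order_trans)
    then have "l (p * n + n0) \<le> l n" by (rule lmono)
    moreover have "l (p * n + n0) = int (length b)" unfolding l_def using p(2) by simp
    ultimately show ?thesis using b(2) by linarith
  qed
  have l0: "l 0 = m" unfolding l_def m_def w0_def by simp
  define Fc where "Fc = ccyl v"
  have Fc_eq: "Fc = cyl v P0" unfolding Fc_def ccyl_eq P0_def W_def by simp
  have walls: "(F ^^ n) c \<in> cyl (w n) (tL - gc (l n)) \<and> (F ^^ n) c \<in> cyl (w n) (tR - gc (l n))"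
    if c: "c \<in> Fc" for c n
  proof -
    have c1: "c \<in> cyl w0 P0" using c cyl_append(1) unfolding Fc_eq v_def by blast
    have "c \<in> cyl (u @ w0) (P0 + m)" using c cyl_append(2) unfolding Fc_eq v_def m_def by blast
    then have c2: "c \<in> cyl w0 (P0 + m + k)" using cyl_append(2) unfolding k_def by fastforce
    show ?thesis
      using wall_shift[OF wall, of c P0 n] wall_shift[OF wall, of c "P0 + m + k" n] c1 c2
      unfolding F_def tL_def tR_def l_def m_def w0_def by (simp add: algebra_simps)
  qed
  have det: "\<forall>i. tL - gc (l n) \<le> i \<longrightarrow> i < tR + l n - gc (l n) \<longrightarrow> (F ^^ n) c i = (F ^^ n) c' i"
    if c: "c \<in> Fc" and c': "c' \<in> Fc" for n c c'
  proof (induction n)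
    case 0
    show ?case
    proof (intro allI impI)
      fix i assume i: "tL - gc (l 0) \<le> i" "i < tR + l 0 - gc (l 0)"
      have "P0 \<le> i" "i < P0 + int (length v)"
        using i unfolding l0 tL_def tR_def W_def[symmetric] W_eq by auto
      then show "(F ^^ 0) c i = (F ^^ 0) c' i"
        using cyl_val[of c v P0 i] cyl_val[of c' v P0 i] c c' unfolding Fc_eq by simp
    qed
  next
    case (Suc n)
    show ?case
    proof (intro allI impI)
      fix i assume i: "tL - gc (l (Suc n)) \<le> i" "i < tR + l (Suc n) - gc (l (Suc n))"
      have lw: "int (length (w (Suc n))) = l (Suc n)" unfolding l_def by simp
      consider (L) "i < tL + l (Suc n) - gc (l (Suc n))" | (R) "tR - gc (l (Suc n)) \<le> i"
        | (M) "tL + l (Suc n) - gc (l (Suc n)) \<le> i" "i < tR - gc (l (Suc n))" by linarith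
      then show "(F ^^ Suc n) c i = (F ^^ Suc n) c' i"
      proof cases
        case L
        then show ?thesis using walls[OF c, of "Suc n"] walls[OF c', of "Suc n"] i
            cyl_val[of "(F ^^ Suc n) c" "w (Suc n)" "tL - gc (l (Suc n))" i]
            cyl_val[of "(F ^^ Suc n) c'" "w (Suc n)" "tL - gc (l (Suc n))" i]
          unfolding lw by simp
      next
        case R
        then show ?thesis using walls[OF c, of "Suc n"] walls[OF c', of "Suc n"] i
            cyl_val[of "(F ^^ Suc n) c" "w (Suc n)" "tR - gc (l (Suc n))" i]
            cyl_val[of "(F ^^ Suc n) c'" "w (Suc n)" "tR - gc (l (Suc n))" i]
          unfolding lw by simp
      next
        case M
        have b: "tL - gc (l n) \<le> i - int r \<and> i + int r < tR + l n - gc (l n)"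
          by (rule middle_ok[OF lr lmono M]) simp
        have "F ((F ^^ n) c) i = F ((F ^^ n) c') i"
          unfolding F_def
          by (rule locality) (use Suc b F_def in auto)
        then show ?thesis by simp
      qed
    qed
  qed
  define cper where "cper i = v ! nat ((i - P0) mod int W)" for i
  have Wpos: "W > 0" unfolding W_def v_def w0_def using wall unfolding is_wall_def by simp
  have cper_in: "cper \<in> Fc"
    unfolding Fc_eq cyl_def cper_def using Wpos W_def by simp
  have cper_per: "sh (int W) cper = cper"
  proof -
    have "(x + int W - P0) mod int W = (x - P0) mod int W" for x
      using mod_add_self2[of "x - P0" "int W"] by (simp add: algebra_simps)
    then show ?thesis unfolding sh_def cper_def fun_eq_iff by simp
  qed
  obtain a b where ab: "a < b" "(F ^^ a) cper = (F ^^ b) cper"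
    using periodic_orbit[OF cper_per Wpos] unfolding F_def by blast
  define w' where "w' n = (if n = 0 then v else map (\<lambda>j. (F ^^ n) cper (- gc K + int j)) [0..<Kn])" for n
  have KnK: "int Kn = K" unfolding Kn_def K_def by (simp add: max_def)
  have Kn_le: "Kn \<le> W" using W_eq k0 m0 Wpos unfolding Kn_def K_def by simp
  have is_w: "is_wall delta r w'"
    unfolding is_wall_def
  proof (intro conjI allI impI ballI)
    fix n show "w' n \<noteq> []" unfolding w'_def using Wpos W_def KnK K_def by (auto simp: Kn_def max_def)
  next
    fix c and n :: nat assume c: "c \<in> ccyl (w' 0)" and n: "1 \<le> n"
    have cF: "c \<in> Fc" using c unfolding Fc_def w'_def by simp
    have len: "length (w' n) = Kn" using n unfolding w'_def by simp
    show "(ca_global delta r ^^ n) c \<in> ccyl (w' n)"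
      unfolding ccyl_eq len cyl_def F_def[symmetric] KnK
    proof (intro CollectI allI impI)
      fix j assume j: "j < Kn"
      have "tL - gc (l n) \<le> - gc K + int j \<and> - gc K + int j < tR + l n - gc (l n)"
        by (rule window_ok[OF k0 m0 K_def lnonempty]) (use j KnK P0_def W_eq tL_def tR_def in auto)
      then have "(F ^^ n) c (- gc K + int j) = (F ^^ n) cper (- gc K + int j)"
        using det[OF cF cper_in] by blast
      then show "(F ^^ n) c (- gc K + int j) = w' n ! j" unfolding w'_def using n j by simp
    qed
  next
    fix m' n :: nat assume "m' \<le> n"
    then show "length (w' n) \<le> length (w' m')" unfolding w'_def using Kn_le W_def by auto
  qed
  moreover have "w' 0 = w 0 @ u @ w 0" unfolding w'_def v_def w0_def by simp
  moreover have "is_brick w' (w' (Suc a)) \<and> length (w' (Suc a)) \<ge> length u"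
  proof
    show "is_brick w' (w' (Suc a))"
      unfolding is_brick_def
    proof (intro exI conjI allI)
      show "1 \<le> b - a" using ab by simp
      fix j
      have "(F ^^ ((b - a) * j + Suc a)) cper = F ((F ^^ ((b - a) * j + a)) cper)" by simp
      also have "\<dots> = (F ^^ Suc a) cper" using orbit_period[OF ab] by simp
      finally show "w' ((b - a) * j + Suc a) = w' (Suc a)" unfolding w'_def by simp
    qed
    show "length u \<le> length (w' (Suc a))" unfolding w'_def Kn_def K_def k_def by simp
  qed
  ultimately show "\<exists>w'. is_wall delta r w' \<and> w' 0 = w 0 @ u @ w 0 \<and>
           (\<exists>b. is_brick w' b \<and> length b \<ge> length u)" by blast
qed

end
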